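(* Let $(R,\mathfrak m,k)$ be a Noetherian local ring with $\mu(\mathfrak m^2)\le 2$. Then there exists $x\in\mathfrak m\setminus\mathfrak m^2$ such that $\mathfrak m^2=x\mathfrak m$. Moreover, if $\operatorname{lo}(R)\ge3$, then any such $x$ satisfies $x^2\notin\mathfrak m^3$.
   Context: $\mu(-)$ is the minimal number of generators. The Loewy length is $\operatorname{lo}(R)=\max\{i:\mathfrak m^i\neq0\}$ if $R$ is Artinian and $\infty$ otherwise. *)

theory Defs
  imports "HOL-Algebra.Ideal_Product" "HOL-Algebra.Ring_Divisibility" "HOL-Library.Extended_Nat"
begin

primrec ideal_pow :: "('a, 'b) ring_scheme \<Rightarrow> 'a set \<Rightarrow> nat \<Rightarrow> 'a set" where
  "ideal_pow R I 0 = carrier R"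
| "ideal_pow R I (Suc n) = ideal_prod R I (ideal_pow R I n)"

definition min_gens :: "('a, 'b) ring_scheme \<Rightarrow> 'a set \<Rightarrow> nat" where
  "min_gens R I = (LEAST n. \<exists>A. A \<subseteq> carrier R \<and> finite A \<and> card A = n \<and> I = Idl\<^bsub>R\<^esub> A)"

definition artinian :: "('a, 'b) ring_scheme \<Rightarrow> bool" where
  "artinian R \<longleftrightarrow> (\<forall>C :: nat \<Rightarrow> 'a set. (\<forall>n. ideal (C n) R \<and> C (Suc n) \<subseteq> C n)
       \<longrightarrow> (\<exists>N. \<forall>n\<ge>N. C n = C N))"

definition loewy_length :: "('a, 'b) ring_scheme \<Rightarrow> 'a set \<Rightarrow> enat" where
  "loewy_length R m = (if artinian R
      then enat (Max {i. ideal_pow R m i \<noteq> {\<zero>\<^bsub>R\<^esub>}}) else \<infinity>)"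

end

theory Submission
  imports Defs
begin

locale loc = cring R for R (structure) + fixes m
  assumes maxm: "maximalideal m R" and uniq: "\<And>J. maximalideal J R \<Longrightarrow> J = m"
begin

lemma m_ideal: "ideal m R" using maxm by (rule maximalideal.axioms(1))

lemma m_carr: "m \<subseteq> carrier R" using ideal.Icarr[OF m_ideal] by blast

lemma one_notin_m: "\<one> \<notin> m"
proof
  assume "\<one> \<in> m" hence "m = carrier R" using ideal.one_imp_carrier[OF m_ideal] by blast
  thus False using maximalideal.I_notcarr[OF maxm] by simp
qed

lemma ideal_closure:
  assumes "S \<subseteq> carrier R" "\<zero> \<in> S" "\<And>x y. x \<in> S \<Longrightarrow> y \<in> S \<Longrightarrow> x \<oplus> y \<in> S"
    "\<And>x c. x \<in> S \<Longrightarrow> c \<in> carrier R \<Longrightarrow> c \<otimes> x \<in> S"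
  shows "ideal S R"
proof (rule idealI[OF ring_axioms])
  show "subgroup S (add_monoid R)"
  proof
    show "S \<subseteq> carrier (add_monoid R)" using assms(1) by simp
    show "\<And>x y. x \<in> S \<Longrightarrow> y \<in> S \<Longrightarrow> x \<otimes>\<^bsub>add_monoid R\<^esub> y \<in> S" using assms(3) by simp
    show "\<one>\<^bsub>add_monoid R\<^esub> \<in> S" using assms(2) by simp
    fix x assume x: "x \<in> S"
    have xc: "x \<in> carrier R" using x assms(1) by blast
    have "(\<ominus> \<one>) \<otimes> x = \<ominus> x" using xc by (simp add: l_minus)
    hence "inv\<^bsub>add_monoid R\<^esub> x = (\<ominus> \<one>) \<otimes> x" by (simp add: a_inv_def)
    thus "inv\<^bsub>add_monoid R\<^esub> x \<in> S" using assms(4)[OF x] by simp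
  qed
next
  fix a x assume "a \<in> S" "x \<in> carrier R"
  thus "x \<otimes> a \<in> S" using assms(4) by blast
  moreover have "a \<in> carrier R" using assms(1) \<open>a \<in> S\<close> by blast
  ultimately show "a \<otimes> x \<in> S" using \<open>x \<in> carrier R\<close> m_comm by simp
qed

lemma unit_lemma:
  assumes x: "x \<in> carrier R" and xm: "x \<notin> m"
  shows "\<exists>y\<in>carrier R. y \<otimes> x = \<one>"
proof (rule ccontr)
  assume nu: "\<not> ?thesis"
  have oneI: "\<one> \<notin> PIdl x" using nu unfolding cgenideal_def by auto
  define A where "A = {J. ideal J R \<and> PIdl x \<subseteq> J \<and> \<one> \<notin> J}"
  have "\<exists>M\<in>A. \<forall>X\<in>A. M \<subseteq> X \<longrightarrow> X = M"
  proof (rule subset_Zorn_nonempty)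
    show "A \<noteq> {}" using oneI cgenideal_ideal[OF x] unfolding A_def by blast
    fix C assume C: "C \<noteq> {}" "subset.chain A C"
    have ch: "subset.chain {I. ideal I R} C" using C(2) unfolding A_def pred_on.chain_def by blast
    have "ideal (\<Union>C) R" using chain_Union_is_ideal[OF ch] C(1) by simp
    moreover have "PIdl x \<subseteq> \<Union>C" using C unfolding A_def pred_on.chain_def by blast
    moreover have "\<one> \<notin> \<Union>C" using C unfolding A_def pred_on.chain_def by blast
    ultimately show "\<Union>C \<in> A" unfolding A_def by blast
  qed
  then obtain M where M: "M \<in> A" "\<And>X. X \<in> A \<Longrightarrow> M \<subseteq> X \<Longrightarrow> X = M" by blast
  have "maximalideal M R"
  proof (rule maximalidealI)
    show "ideal M R" using M unfolding A_def by blast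
    show "carrier R \<noteq> M" using M unfolding A_def by blast
    fix J assume J: "ideal J R" "M \<subseteq> J" "J \<subseteq> carrier R"
    show "J = M \<or> J = carrier R"
    proof (cases "\<one> \<in> J")
      case True then show ?thesis using ideal.one_imp_carrier[OF J(1)] by blast
    next
      case False then have "J \<in> A" using J M(1) unfolding A_def by blast
      then show ?thesis using M(2) J(2) by blast
    qed
  qed
  hence "M = m" using uniq by blast
  moreover have "x \<in> M" using M(1) cgenideal_self[OF x] unfolding A_def by blast
  ultimately show False using xm by blast
qed


lemma I_add: "ideal K R \<Longrightarrow> a \<in> K \<Longrightarrow> b \<in> K \<Longrightarrow> a \<oplus> b \<in> K"
  by (rule additive_subgroup.a_closed[OF ideal.axioms(1)])

lemma I_zero: "ideal K R \<Longrightarrow> \<zero> \<in> K"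
  by (rule additive_subgroup.zero_closed[OF ideal.axioms(1)])

lemma I_neg: "ideal K R \<Longrightarrow> a \<in> K \<Longrightarrow> \<ominus> a \<in> K"
  by (rule additive_subgroup.a_inv_closed[OF ideal.axioms(1)])

lemma I_minus: "ideal K R \<Longrightarrow> a \<in> K \<Longrightarrow> b \<in> K \<Longrightarrow> a \<ominus> b \<in> K"
  unfolding a_minus_def by (rule I_add, assumption, assumption, rule I_neg)

lemma I_lmul: "ideal K R \<Longrightarrow> a \<in> K \<Longrightarrow> c \<in> carrier R \<Longrightarrow> c \<otimes> a \<in> K"
  by (rule ideal.I_l_closed)

lemma I_rmul: "ideal K R \<Longrightarrow> a \<in> K \<Longrightarrow> c \<in> carrier R \<Longrightarrow> a \<otimes> c \<in> K"
  by (rule ideal.I_r_closed)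

lemma I_carr: "ideal K R \<Longrightarrow> a \<in> K \<Longrightarrow> a \<in> carrier R"
  by (rule ideal.Icarr)

lemma pow_ideal: "ideal (ideal_pow R m n) R"
  by (induction n) (simp_all add: oneideal ideal_prod_is_ideal m_ideal)

lemma pow_Suc_sub: "ideal_pow R m (Suc n) \<subseteq> ideal_pow R m n"
  using ideal_prod_inter[OF m_ideal pow_ideal[of n]] by simp

lemma pow_mono: "k \<le> n \<Longrightarrow> ideal_pow R m n \<subseteq> ideal_pow R m k"
proof (induction n rule: dec_induct)
  case base then show ?case by simp
next
  case (step n) then show ?case using pow_Suc_sub[of n] by blast
qed

lemma pow2: "ideal_pow R m 2 = ideal_prod R m m"
  by (simp add: numeral_2_eq_2 ideal_prod_one m_ideal)

lemma pow3: "ideal_pow R m 3 = ideal_prod R m (ideal_pow R m 2)"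
  by (simp add: numeral_3_eq_3 numeral_2_eq_2)

lemma prod_min:
  assumes K: "ideal K R" and h: "\<And>i j. i \<in> I \<Longrightarrow> j \<in> J \<Longrightarrow> i \<otimes> j \<in> K"
  shows "ideal_prod R I J \<subseteq> K"
proof
  fix s assume "s \<in> ideal_prod R I J" thus "s \<in> K"
    by (induct rule: ideal_prod.induct) (auto intro: h I_add[OF K])
qed

lemma mm2: "x \<in> m \<Longrightarrow> y \<in> m \<Longrightarrow> x \<otimes> y \<in> ideal_pow R m 2"
  unfolding pow2 by (rule ideal_prod.prod)

lemma m3: "r \<in> m \<Longrightarrow> v \<in> ideal_pow R m 2 \<Longrightarrow> r \<otimes> v \<in> ideal_pow R m 3"
  unfolding pow3 by (rule ideal_prod.prod)

lemma m3': "r \<in> m \<Longrightarrow> v \<in> ideal_pow R m 2 \<Longrightarrow> v \<otimes> r \<in> ideal_pow R m 3"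
proof -
  assume a: "r \<in> m" "v \<in> ideal_pow R m 2"
  have "r \<in> carrier R" "v \<in> carrier R" using a m_carr I_carr[OF pow_ideal] by auto
  hence "v \<otimes> r = r \<otimes> v" by (simp add: m_comm)
  thus ?thesis using m3[OF a] by simp
qed

lemma M2_min: "ideal K R \<Longrightarrow> (\<And>x y. x \<in> m \<Longrightarrow> y \<in> m \<Longrightarrow> x \<otimes> y \<in> K) \<Longrightarrow> ideal_pow R m 2 \<subseteq> K"
  unfolding pow2 by (rule prod_min)

lemma M3_M2: "ideal_pow R m 3 \<subseteq> ideal_pow R m 2" by (rule pow_mono) simp
lemma M2_m: "ideal_pow R m 2 \<subseteq> m" using pow_mono[of 1 2] ideal_prod_one[OF m_ideal] by simp

lemma sa_iff: "x \<in> I <+>\<^bsub>R\<^esub> J \<longleftrightarrow> (\<exists>i\<in>I. \<exists>j\<in>J. x = i \<oplus> j)"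
  unfolding set_add_def' by blast

definition S2 where "S2 a b = {c \<otimes> a \<oplus> d \<otimes> b | c d. c \<in> carrier R \<and> d \<in> carrier R}"

lemma S2_ideal: assumes "a \<in> carrier R" "b \<in> carrier R" shows "ideal (S2 a b) R"
proof (rule ideal_closure)
  show "S2 a b \<subseteq> carrier R" unfolding S2_def using assms by auto
  show "\<zero> \<in> S2 a b" unfolding S2_def using assms
    by (auto intro!: exI[of _ \<zero>])
  fix x y assume "x \<in> S2 a b" "y \<in> S2 a b"
  then obtain c d c' d' where "c \<in> carrier R" "d \<in> carrier R" "c' \<in> carrier R" "d' \<in> carrier R"
    "x = c \<otimes> a \<oplus> d \<otimes> b" "y = c' \<otimes> a \<oplus> d' \<otimes> b" unfolding S2_def by blast
  moreover have "c \<otimes> a \<oplus> d \<otimes> b \<oplus> (c' \<otimes> a \<oplus> d' \<otimes> b) = (c \<oplus> c') \<otimes> a \<oplus> (d \<oplus> d') \<otimes> b"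
    using calculation assms by algebra
  ultimately show "x \<oplus> y \<in> S2 a b" unfolding S2_def by auto
next
  fix x e assume "x \<in> S2 a b" "e \<in> carrier R"
  then obtain c d where "c \<in> carrier R" "d \<in> carrier R"
    "x = c \<otimes> a \<oplus> d \<otimes> b" unfolding S2_def by blast
  moreover have "e \<otimes> (c \<otimes> a \<oplus> d \<otimes> b) = (e \<otimes> c) \<otimes> a \<oplus> (e \<otimes> d) \<otimes> b"
    using calculation assms \<open>e \<in> carrier R\<close> by algebra
  ultimately show "e \<otimes> x \<in> S2 a b" unfolding S2_def using \<open>e \<in> carrier R\<close> by auto
qed

lemma Idl2: assumes "a \<in> carrier R" "b \<in> carrier R" shows "Idl {a, b} = S2 a b"
proof
  have "a = \<one> \<otimes> a \<oplus> \<zero> \<otimes> b" "b = \<zero> \<otimes> a \<oplus> \<one> \<otimes> b" using assms by simp_all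
  hence "a \<in> S2 a b" "b \<in> S2 a b" unfolding S2_def by blast+
  thus "Idl {a, b} \<subseteq> S2 a b" by (intro genideal_minimal[OF S2_ideal[OF assms]]) simp
next
  have I: "ideal (Idl {a, b}) R" using genideal_ideal assms by simp
  have sub: "{a, b} \<subseteq> Idl {a, b}" by (rule genideal_self) (use assms in simp)
  hence ab: "a \<in> Idl {a, b}" "b \<in> Idl {a, b}" by auto
  show "S2 a b \<subseteq> Idl {a, b}" unfolding S2_def
    using I_add[OF I] I_lmul[OF I] ab by blast
qed

lemma nak:
  assumes J: "ideal J R" and ab: "a \<in> carrier R" "b \<in> carrier R"
    and j: "j1 \<in> J" "j2 \<in> J" and rs: "r \<in> m" "s \<in> m" "t \<in> m" "u \<in> m"
    and ea: "a = j1 \<oplus> (r \<otimes> a \<oplus> s \<otimes> b)" and eb: "b = j2 \<oplus> (t \<otimes> a \<oplus> u \<otimes> b)"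
  shows "a \<in> J \<and> b \<in> J"
proof -
  have c: "r \<in> carrier R" "s \<in> carrier R" "t \<in> carrier R" "u \<in> carrier R"
    using rs m_carr by auto
  have jc: "j1 \<in> carrier R" "j2 \<in> carrier R" using j I_carr[OF J] by auto
  have e1: "(\<one> \<ominus> r) \<otimes> a \<ominus> s \<otimes> b = j1"
  proof -
    have "(\<one> \<ominus> r) \<otimes> a \<ominus> s \<otimes> b = a \<ominus> (r \<otimes> a \<oplus> s \<otimes> b)" using c ab by algebra
    also have "\<dots> = j1 \<oplus> (r \<otimes> a \<oplus> s \<otimes> b) \<ominus> (r \<otimes> a \<oplus> s \<otimes> b)" using ea by simp
    also have "\<dots> = j1" using c ab jc by algebra
    finally show ?thesis .
  qed
  have e2: "(\<one> \<ominus> u) \<otimes> b \<ominus> t \<otimes> a = j2"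
  proof -
    have "(\<one> \<ominus> u) \<otimes> b \<ominus> t \<otimes> a = b \<ominus> (t \<otimes> a \<oplus> u \<otimes> b)" using c ab by algebra
    also have "\<dots> = j2 \<oplus> (t \<otimes> a \<oplus> u \<otimes> b) \<ominus> (t \<otimes> a \<oplus> u \<otimes> b)" using eb by simp
    also have "\<dots> = j2" using c ab jc by algebra
    finally show ?thesis .
  qed
  define D where "D = (\<one> \<ominus> r) \<otimes> (\<one> \<ominus> u) \<ominus> s \<otimes> t"
  have Dc: "D \<in> carrier R" unfolding D_def using c by simp
  have Da: "D \<otimes> a = (\<one> \<ominus> u) \<otimes> ((\<one> \<ominus> r) \<otimes> a \<ominus> s \<otimes> b) \<oplus> s \<otimes> ((\<one> \<ominus> u) \<otimes> b \<ominus> t \<otimes> a)"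
    unfolding D_def using c ab by algebra
  have Db: "D \<otimes> b = (\<one> \<ominus> r) \<otimes> ((\<one> \<ominus> u) \<otimes> b \<ominus> t \<otimes> a) \<oplus> t \<otimes> ((\<one> \<ominus> r) \<otimes> a \<ominus> s \<otimes> b)"
    unfolding D_def using c ab by algebra
  have DaJ: "D \<otimes> a \<in> J" unfolding Da e1 e2 using j c J I_add I_lmul by simp
  have DbJ: "D \<otimes> b \<in> J" unfolding Db e1 e2 using j c J I_add I_lmul by simp
  have "\<one> = D \<oplus> (r \<oplus> u \<ominus> r \<otimes> u \<oplus> s \<otimes> t)" unfolding D_def using c by algebra
  moreover have "r \<oplus> u \<ominus> r \<otimes> u \<oplus> s \<otimes> t \<in> m"
    using rs c m_ideal I_add I_minus I_lmul by simp
  ultimately have "D \<notin> m" using one_notin_m I_add[OF m_ideal, of D] by auto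
  then obtain y where y: "y \<in> carrier R" "y \<otimes> D = \<one>" using unit_lemma Dc by blast
  have "a = y \<otimes> (D \<otimes> a)" using y Dc ab by (simp add: m_assoc[symmetric])
  moreover have "b = y \<otimes> (D \<otimes> b)" using y Dc ab by (simp add: m_assoc[symmetric])
  ultimately show ?thesis using I_lmul[OF J DaJ y(1)] I_lmul[OF J DbJ y(1)] by simp
qed


abbreviation "M2 \<equiv> ideal_pow R m 2"
abbreviation "M3 \<equiv> ideal_pow R m 3"

lemma M2_ideal: "ideal M2 R" by (rule pow_ideal)
lemma M3_ideal: "ideal M3 R" by (rule pow_ideal)

lemma M2_carr: "v \<in> M2 \<Longrightarrow> v \<in> carrier R" by (rule I_carr[OF M2_ideal])
lemma M3_carr: "v \<in> M3 \<Longrightarrow> v \<in> carrier R" by (rule I_carr[OF M3_ideal])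
lemma m_carr': "v \<in> m \<Longrightarrow> v \<in> carrier R" using m_carr by blast

lemma in_sum_left: "ideal J R \<Longrightarrow> i \<in> I \<Longrightarrow> i \<in> carrier R \<Longrightarrow> i \<in> I <+>\<^bsub>R\<^esub> J"
  unfolding sa_iff by (intro bexI[of _ i] bexI[of _ \<zero>]) (simp_all add: I_zero)

lemma in_sum_right: "ideal I R \<Longrightarrow> j \<in> J \<Longrightarrow> j \<in> carrier R \<Longrightarrow> j \<in> I <+>\<^bsub>R\<^esub> J"
  unfolding sa_iff by (intro bexI[of _ \<zero>] bexI[of _ j]) (simp_all add: I_zero)

lemma cancel:
  assumes K: "ideal K R" and c: "c \<in> carrier R" "c \<notin> m" and v: "v \<in> carrier R" and cv: "c \<otimes> v \<in> K"
  shows "v \<in> K"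
proof -
  obtain y where y: "y \<in> carrier R" "y \<otimes> c = \<one>" using unit_lemma c by blast
  have "v = y \<otimes> (c \<otimes> v)" using y c v by (simp add: m_assoc[symmetric])
  thus ?thesis using I_lmul[OF K cv y(1)] by simp
qed

definition P where "P w = {w \<otimes> r | r. r \<in> m}"

lemma P_ideal: assumes w: "w \<in> carrier R" shows "ideal (P w) R"
proof (rule ideal_closure)
  show "P w \<subseteq> carrier R" unfolding P_def using w m_carr by auto
  have "\<zero> = w \<otimes> \<zero>" using w by simp
  thus "\<zero> \<in> P w" unfolding P_def using I_zero[OF m_ideal] by blast
  fix x y assume "x \<in> P w" "y \<in> P w"
  then obtain r r' where r: "r \<in> m" "r' \<in> m" "x = w \<otimes> r" "y = w \<otimes> r'" unfolding P_def by blast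
  have "w \<otimes> r \<oplus> w \<otimes> r' = w \<otimes> (r \<oplus> r')" using r w m_carr' by (simp add: r_distr)
  thus "x \<oplus> y \<in> P w" unfolding P_def using r I_add[OF m_ideal] by auto
next
  fix x c assume "x \<in> P w" "c \<in> carrier R"
  then obtain r where r: "r \<in> m" "x = w \<otimes> r" unfolding P_def by blast
  have "c \<otimes> (w \<otimes> r) = w \<otimes> (c \<otimes> r)" using r w m_carr' \<open>c \<in> carrier R\<close> by algebra
  thus "c \<otimes> x \<in> P w" unfolding P_def using r I_lmul[OF m_ideal] \<open>c \<in> carrier R\<close> by auto
qed

lemma P_mem: "r \<in> m \<Longrightarrow> w \<otimes> r \<in> P w" unfolding P_def by blast

lemma P_eq: assumes w: "w \<in> carrier R" shows "ideal_prod R (PIdl w) m = P w"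
proof
  show "ideal_prod R (PIdl w) m \<subseteq> P w"
  proof (rule prod_min[OF P_ideal[OF w]])
    fix i j assume "i \<in> PIdl w" "j \<in> m"
    then obtain c where c: "c \<in> carrier R" "i = c \<otimes> w" unfolding cgenideal_def by blast
    have "c \<otimes> w \<otimes> j = w \<otimes> (c \<otimes> j)" using c w m_carr' \<open>j \<in> m\<close> by algebra
    thus "i \<otimes> j \<in> P w" using c P_mem I_lmul[OF m_ideal \<open>j \<in> m\<close> c(1)] by simp
  qed
  show "P w \<subseteq> ideal_prod R (PIdl w) m"
    unfolding P_def using ideal_prod.prod[OF cgenideal_self[OF w]] by blast
qed

definition N where "N w = P w <+>\<^bsub>R\<^esub> M3"

lemma N_ideal: "w \<in> carrier R \<Longrightarrow> ideal (N w) R"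
  unfolding N_def by (rule add_ideals[OF P_ideal M3_ideal])

lemma M3_N: "w \<in> carrier R \<Longrightarrow> q \<in> M3 \<Longrightarrow> q \<in> N w"
  unfolding N_def by (rule in_sum_right[OF P_ideal], assumption+, rule M3_carr)

lemma P_N: "w \<in> carrier R \<Longrightarrow> r \<in> m \<Longrightarrow> w \<otimes> r \<in> N w"
  unfolding N_def by (rule in_sum_left[OF M3_ideal P_mem]) (simp_all add: m_carr')

lemma M3_elem:
  assumes ab: "a \<in> carrier R" "b \<in> carrier R" and g: "M2 = Idl {a, b}" and v: "v \<in> M3"
  shows "\<exists>r\<in>m. \<exists>s\<in>m. v = r \<otimes> a \<oplus> s \<otimes> b"
proof -
  define T where "T = {r \<otimes> a \<oplus> s \<otimes> b | r s. r \<in> m \<and> s \<in> m}"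
  have TI: "ideal T R"
  proof (rule ideal_closure)
    show "T \<subseteq> carrier R" unfolding T_def using ab m_carr by auto
    have "\<zero> = \<zero> \<otimes> a \<oplus> \<zero> \<otimes> b" using ab by simp
    thus "\<zero> \<in> T" unfolding T_def using I_zero[OF m_ideal] by blast
    fix x y assume "x \<in> T" "y \<in> T"
    then obtain c d c' d' where cd: "c \<in> m" "d \<in> m" "c' \<in> m" "d' \<in> m"
      "x = c \<otimes> a \<oplus> d \<otimes> b" "y = c' \<otimes> a \<oplus> d' \<otimes> b" unfolding T_def by blast
    have "c \<otimes> a \<oplus> d \<otimes> b \<oplus> (c' \<otimes> a \<oplus> d' \<otimes> b) = (c \<oplus> c') \<otimes> a \<oplus> (d \<oplus> d') \<otimes> b"
      using cd m_carr' ab by algebra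
    thus "x \<oplus> y \<in> T" unfolding T_def using cd I_add[OF m_ideal] by auto
  next
    fix x e assume "x \<in> T" "e \<in> carrier R"
    then obtain c d where cd: "c \<in> m" "d \<in> m" "x = c \<otimes> a \<oplus> d \<otimes> b" unfolding T_def by blast
    have "e \<otimes> (c \<otimes> a \<oplus> d \<otimes> b) = (e \<otimes> c) \<otimes> a \<oplus> (e \<otimes> d) \<otimes> b"
      using cd m_carr' ab \<open>e \<in> carrier R\<close> by algebra
    thus "e \<otimes> x \<in> T" unfolding T_def using cd I_lmul[OF m_ideal] \<open>e \<in> carrier R\<close> by auto
  qed
  have "M3 \<subseteq> T" unfolding pow3
  proof (rule prod_min[OF TI])
    fix i j assume ij: "i \<in> m" "j \<in> M2"
    then obtain c d where cd: "c \<in> carrier R" "d \<in> carrier R" "j = c \<otimes> a \<oplus> d \<otimes> b"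
      using g Idl2[OF ab] unfolding S2_def by auto
    have "i \<otimes> (c \<otimes> a \<oplus> d \<otimes> b) = (i \<otimes> c) \<otimes> a \<oplus> (i \<otimes> d) \<otimes> b"
      using cd m_carr' ab ij by algebra
    thus "i \<otimes> j \<in> T" unfolding T_def using cd ij I_rmul[OF m_ideal] by auto
  qed
  thus ?thesis using v unfolding T_def by blast
qed

lemma nak_ideal:
  assumes ab: "a \<in> carrier R" "b \<in> carrier R" and g: "M2 = Idl {a, b}"
    and J: "ideal J R" and sub: "M2 \<subseteq> J <+>\<^bsub>R\<^esub> M3"
  shows "M2 \<subseteq> J"
proof -
  have "{a, b} \<subseteq> Idl {a, b}" by (rule genideal_self) (use ab in simp)
  hence "a \<in> M2" "b \<in> M2" using g by auto
  hence "a \<in> J <+>\<^bsub>R\<^esub> M3" "b \<in> J <+>\<^bsub>R\<^esub> M3" using sub by auto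
  then obtain j1 q1 j2 q2 where jq: "j1 \<in> J" "q1 \<in> M3" "a = j1 \<oplus> q1" "j2 \<in> J" "q2 \<in> M3" "b = j2 \<oplus> q2"
    unfolding sa_iff by blast
  obtain r s where rs: "r \<in> m" "s \<in> m" "q1 = r \<otimes> a \<oplus> s \<otimes> b" using M3_elem[OF ab g jq(2)] by blast
  obtain t u where tu: "t \<in> m" "u \<in> m" "q2 = t \<otimes> a \<oplus> u \<otimes> b" using M3_elem[OF ab g jq(5)] by blast
  have ea: "a = j1 \<oplus> (r \<otimes> a \<oplus> s \<otimes> b)" using jq(3) unfolding rs(3) .
  have eb: "b = j2 \<oplus> (t \<otimes> a \<oplus> u \<otimes> b)" using jq(6) unfolding tu(3) .
  have "a \<in> J \<and> b \<in> J"
    by (rule nak[OF J ab jq(1) jq(4) rs(1,2) tu(1,2) ea eb])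
  hence "{a, b} \<subseteq> J" by simp
  thus ?thesis unfolding g by (rule genideal_minimal[OF J])
qed


lemma finish:
  assumes ab: "a \<in> carrier R" "b \<in> carrier R" and g: "M2 = Idl {a, b}"
    and w: "w \<in> m" and sub: "M2 \<subseteq> N w" and p: "p \<in> M2" "p \<notin> M3"
  shows "w \<in> m - M2 \<and> M2 = ideal_prod R (PIdl w) m"
proof -
  have wc: "w \<in> carrier R" using w m_carr by blast
  have "M2 \<subseteq> P w" using nak_ideal[OF ab g P_ideal[OF wc]] sub unfolding N_def by blast
  moreover have "P w \<subseteq> M2" unfolding P_def using mm2 w by blast
  ultimately have eq: "M2 = P w" by blast
  have "w \<notin> M2"
  proof
    assume "w \<in> M2"
    hence "P w \<subseteq> M3" unfolding P_def using m3' by blast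
    thus False using eq p by blast
  qed
  thus ?thesis using eq P_eq[OF wc] w by simp
qed

lemma exchange:
  assumes ab: "a \<in> carrier R" "b \<in> carrier R" and g: "M2 = Idl {a, b}"
    and p: "p1 \<in> M2" "p2 \<in> M2" "p1 \<notin> M3" "p2 \<notin> PIdl p1 <+>\<^bsub>R\<^esub> M3"
  shows "M2 \<subseteq> Idl {p1, p2}"
proof -
  have pc: "p1 \<in> carrier R" "p2 \<in> carrier R" using p M2_carr by auto
  obtain \<alpha> \<beta> where ab1: "\<alpha> \<in> carrier R" "\<beta> \<in> carrier R" and e1: "p1 = \<alpha> \<otimes> a \<oplus> \<beta> \<otimes> b"
    using p(1) g Idl2[OF ab] unfolding S2_def by blast
  obtain \<gamma> \<delta> where ab2: "\<gamma> \<in> carrier R" "\<delta> \<in> carrier R" and e2: "p2 = \<gamma> \<otimes> a \<oplus> \<delta> \<otimes> b"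
    using p(2) g Idl2[OF ab] unfolding S2_def by blast
  define D where "D = \<alpha> \<otimes> \<delta> \<ominus> \<beta> \<otimes> \<gamma>"
  have Dc: "D \<in> carrier R" unfolding D_def using ab1 ab2 by simp
  have Da: "D \<otimes> a = \<delta> \<otimes> p1 \<ominus> \<beta> \<otimes> p2"
    unfolding D_def e1 e2 using ab ab1 ab2 by algebra
  have Db: "D \<otimes> b = \<alpha> \<otimes> p2 \<ominus> \<gamma> \<otimes> p1"
    unfolding D_def e1 e2 using ab ab1 ab2 by algebra
  have Q: "ideal (PIdl p1 <+>\<^bsub>R\<^esub> M3) R" by (rule add_ideals[OF cgenideal_ideal[OF pc(1)] M3_ideal])
  have I: "ideal (Idl {p1, p2}) R" using genideal_ideal pc by simp
  have sub: "{p1, p2} \<subseteq> Idl {p1, p2}" by (rule genideal_self) (use pc in simp)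
  have aM2: "a \<in> M2" "b \<in> M2"
  proof -
    have "{a, b} \<subseteq> Idl {a, b}" by (rule genideal_self) (use ab in simp)
    thus "a \<in> M2" "b \<in> M2" using g by auto
  qed
  have key: "v \<in> PIdl p1 <+>\<^bsub>R\<^esub> M3" if v: "v \<in> carrier R" "c \<in> carrier R" "v \<ominus> c \<otimes> p1 \<in> M3" for v c
  proof -
    have "c \<otimes> p1 \<in> PIdl p1" unfolding cgenideal_def using v(2) by blast
    moreover have "v = c \<otimes> p1 \<oplus> (v \<ominus> c \<otimes> p1)" using v pc by algebra
    ultimately show ?thesis unfolding sa_iff using v(3) by blast
  qed
  have "D \<notin> m"
  proof
    assume Dm: "D \<in> m"
    have Da3: "\<delta> \<otimes> p1 \<ominus> \<beta> \<otimes> p2 \<in> M3" using m3[OF Dm aM2(1)] Da by simp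
    have Db3: "\<alpha> \<otimes> p2 \<ominus> \<gamma> \<otimes> p1 \<in> M3" using m3[OF Dm aM2(2)] Db by simp
    have \<beta>m: "\<beta> \<in> m"
    proof (rule ccontr)
      assume "\<beta> \<notin> m"
      have "\<beta> \<otimes> p2 \<ominus> \<delta> \<otimes> p1 = \<ominus> (\<delta> \<otimes> p1 \<ominus> \<beta> \<otimes> p2)" using pc ab1 ab2 by algebra
      hence "\<beta> \<otimes> p2 \<ominus> \<delta> \<otimes> p1 \<in> M3" using I_neg[OF M3_ideal Da3] by simp
      hence "\<beta> \<otimes> p2 \<in> PIdl p1 <+>\<^bsub>R\<^esub> M3" using key[of "\<beta> \<otimes> p2" "\<delta>"] pc ab1 ab2 by simp
      hence "p2 \<in> PIdl p1 <+>\<^bsub>R\<^esub> M3" using cancel[OF Q ab1(2) \<open>\<beta> \<notin> m\<close> pc(2)] by simp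
      thus False using p(4) by blast
    qed
    have \<alpha>m: "\<alpha> \<in> m"
    proof (rule ccontr)
      assume "\<alpha> \<notin> m"
      hence "\<alpha> \<otimes> p2 \<in> PIdl p1 <+>\<^bsub>R\<^esub> M3" using key[of "\<alpha> \<otimes> p2" "\<gamma>"] pc ab1 ab2 Db3 by simp
      hence "p2 \<in> PIdl p1 <+>\<^bsub>R\<^esub> M3" using cancel[OF Q ab1(1) \<open>\<alpha> \<notin> m\<close> pc(2)] by simp
      thus False using p(4) by blast
    qed
    have "p1 \<in> M3" unfolding e1 using I_add[OF M3_ideal m3[OF \<alpha>m aM2(1)] m3[OF \<beta>m aM2(2)]] .
    thus False using p(3) by blast
  qed
  have "D \<otimes> a \<in> Idl {p1, p2}" unfolding Da using sub I_minus[OF I] I_lmul[OF I] ab1 ab2 by simp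
  hence aI: "a \<in> Idl {p1, p2}" using cancel[OF I Dc \<open>D \<notin> m\<close> ab(1)] by simp
  have "D \<otimes> b \<in> Idl {p1, p2}" unfolding Db using sub I_minus[OF I] I_lmul[OF I] ab1 ab2 by simp
  hence bI: "b \<in> Idl {p1, p2}" using cancel[OF I Dc \<open>D \<notin> m\<close> ab(2)] by simp
  have "{a, b} \<subseteq> Idl {p1, p2}" using aI bI by simp
  thus ?thesis unfolding g by (rule genideal_minimal[OF I])
qed


lemma cross:
  assumes uv: "u \<in> m" "v \<in> m" and p: "p1 \<in> M2" "p2 \<in> M2"
    and T: "M2 \<subseteq> Idl {p1, p2} <+>\<^bsub>R\<^esub> M3"
    and h1: "p1 \<in> N u" and h2: "p2 \<notin> N u" and h3: "p2 \<in> N v" and h4: "p1 \<notin> N v"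
  shows "u \<otimes> v \<in> M3"
proof -
  have pc: "p1 \<in> carrier R" "p2 \<in> carrier R" using p M2_carr by auto
  have uvc: "u \<in> carrier R" "v \<in> carrier R" using uv m_carr by auto
  have "u \<otimes> v \<in> Idl {p1, p2} <+>\<^bsub>R\<^esub> M3" using mm2[OF uv] T by blast
  then obtain i q where iq: "i \<in> Idl {p1, p2}" "q \<in> M3" "u \<otimes> v = i \<oplus> q"
    unfolding sa_iff by blast
  obtain c d where cd: "c \<in> carrier R" "d \<in> carrier R" "i = c \<otimes> p1 \<oplus> d \<otimes> p2"
    using iq(1) Idl2[OF pc] unfolding S2_def by blast
  have qc: "q \<in> carrier R" using M3_carr iq(2) .
  have e: "u \<otimes> v = c \<otimes> p1 \<oplus> d \<otimes> p2 \<oplus> q" using iq(3) cd(3) by simp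
  have Nu: "ideal (N u) R" "ideal (N v) R" using N_ideal uvc by auto
  have uvNu: "u \<otimes> v \<in> N u" using P_N uvc(1) uv(2) .
  have "v \<otimes> u \<in> N v" using P_N uvc(2) uv(1) .
  hence uvNv: "u \<otimes> v \<in> N v" using m_comm uvc by simp
  have d1: "d \<otimes> p2 = (c \<otimes> p1 \<oplus> d \<otimes> p2 \<oplus> q) \<ominus> q \<ominus> c \<otimes> p1" using cd pc qc by algebra
  have X1: "(c \<otimes> p1 \<oplus> d \<otimes> p2 \<oplus> q) \<ominus> q \<ominus> c \<otimes> p1 \<in> N u" unfolding e[symmetric]
    by (intro I_minus[OF Nu(1)] uvNu M3_N[OF uvc(1) iq(2)] I_lmul[OF Nu(1) h1 cd(1)])
  have "d \<otimes> p2 \<in> N u" by (subst d1) (rule X1)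
  hence dm: "d \<in> m" using cancel[OF Nu(1) cd(2) _ pc(2)] h2 by blast
  have c1: "c \<otimes> p1 = (c \<otimes> p1 \<oplus> d \<otimes> p2 \<oplus> q) \<ominus> q \<ominus> d \<otimes> p2" using cd pc qc by algebra
  have X2: "(c \<otimes> p1 \<oplus> d \<otimes> p2 \<oplus> q) \<ominus> q \<ominus> d \<otimes> p2 \<in> N v" unfolding e[symmetric]
    by (intro I_minus[OF Nu(2)] uvNv M3_N[OF uvc(2) iq(2)] I_lmul[OF Nu(2) h3 cd(2)])
  have "c \<otimes> p1 \<in> N v" by (subst c1) (rule X2)
  hence cm: "c \<in> m" using cancel[OF Nu(2) cd(1) _ pc(1)] h4 by blast
  show ?thesis unfolding e
    by (intro I_add[OF M3_ideal] m3[OF cm p(1)] m3[OF dm p(2)] iq(2))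
qed

lemma cand:
  assumes xyzt: "x \<in> m" "y \<in> m" "z \<in> m" "t \<in> m"
    and T: "M2 \<subseteq> Idl {x \<otimes> y, z \<otimes> t} <+>\<^bsub>R\<^esub> M3"
  shows "\<exists>w\<in>m. M2 \<subseteq> N w"
proof -
  have p: "x \<otimes> y \<in> M2" "z \<otimes> t \<in> M2" using mm2 xyzt by auto
  have pc: "x \<otimes> y \<in> carrier R" "z \<otimes> t \<in> carrier R" using p M2_carr by auto
  have c: "x \<in> carrier R" "y \<in> carrier R" "z \<in> carrier R" "t \<in> carrier R" using xyzt m_carr by auto
  have good: "M2 \<subseteq> N w" if w: "w \<in> m" "x \<otimes> y \<in> N w" "z \<otimes> t \<in> N w" for w
  proof -
    have wc: "w \<in> carrier R" using w m_carr by auto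
    have "Idl {x \<otimes> y, z \<otimes> t} \<subseteq> N w" using w by (intro genideal_minimal[OF N_ideal[OF wc]]) simp
    moreover have "M3 \<subseteq> N w" using M3_N[OF wc] by blast
    ultimately have "Idl {x \<otimes> y, z \<otimes> t} <+>\<^bsub>R\<^esub> M3 \<subseteq> N w"
      using I_add[OF N_ideal[OF wc]] unfolding set_add_def' by blast
    thus ?thesis using T by blast
  qed
  have p1x: "x \<otimes> y \<in> N x" using P_N c xyzt by blast
  have p1y: "x \<otimes> y \<in> N y" using P_N[OF c(2) xyzt(1)] m_comm c by simp
  have p2z: "z \<otimes> t \<in> N z" using P_N c xyzt by blast
  have p2t: "z \<otimes> t \<in> N t" using P_N[OF c(4) xyzt(3)] m_comm c by simp
  show ?thesis
  proof (cases "z \<otimes> t \<in> N x")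
    case True then show ?thesis using good[OF xyzt(1) p1x] xyzt by blast
  next
    case nx: False
    show ?thesis
    proof (cases "z \<otimes> t \<in> N y")
      case True then show ?thesis using good[OF xyzt(2) p1y] xyzt by blast
    next
      case ny: False
      show ?thesis
      proof (cases "x \<otimes> y \<in> N z")
        case True then show ?thesis using good[OF xyzt(3) _ p2z] xyzt by blast
      next
        case nz: False
        show ?thesis
        proof (cases "x \<otimes> y \<in> N t")
          case True then show ?thesis using good[OF xyzt(4) _ p2t] xyzt by blast
        next
          case nt: False
          have zy: "y \<otimes> z \<in> M3" by (rule cross[OF xyzt(2,3) p T p1y ny p2z nz])
          have xt: "x \<otimes> t \<in> M3" by (rule cross[OF xyzt(1,4) p T p1x nx p2t nt])
          define w where "w = x \<oplus> z"
          have wm: "w \<in> m" unfolding w_def using I_add[OF m_ideal] xyzt by blast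
          have wc: "w \<in> carrier R" unfolding w_def using c by simp
          have NI: "ideal (N w) R" using N_ideal[OF wc] .
          have e1: "x \<otimes> y = w \<otimes> y \<ominus> y \<otimes> z" unfolding w_def using c by algebra
          have e2: "z \<otimes> t = w \<otimes> t \<ominus> x \<otimes> t" unfolding w_def using c by algebra
          have "x \<otimes> y \<in> N w" unfolding e1
            by (intro I_minus[OF NI] P_N[OF wc xyzt(2)] M3_N[OF wc zy])
          moreover have "z \<otimes> t \<in> N w" unfolding e2
            by (intro I_minus[OF NI] P_N[OF wc xyzt(4)] M3_N[OF wc xt])
          ultimately show ?thesis using good[OF wm] wm by blast
        qed
      qed
    qed
  qed
qed


lemma part1:
  assumes ab: "a \<in> carrier R" "b \<in> carrier R" and g: "M2 = Idl {a, b}"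
    and mne: "m \<noteq> {\<zero>}"
  shows "\<exists>x \<in> m - M2. M2 = ideal_prod R (PIdl x) m"
proof (cases "\<forall>x\<in>m. \<forall>y\<in>m. x \<otimes> y \<in> M3")
  case True
  have "M2 \<subseteq> M3" using True by (intro M2_min[OF M3_ideal]) blast
  hence "M2 \<subseteq> {\<zero>} <+>\<^bsub>R\<^esub> M3" using in_sum_right[OF zeroideal] M3_carr by blast
  hence M20: "M2 \<subseteq> {\<zero>}" by (rule nak_ideal[OF ab g zeroideal])
  have z2: "\<zero> \<in> M2" by (rule I_zero[OF M2_ideal])
  have z1: "\<zero> \<in> m" by (rule I_zero[OF m_ideal])
  obtain w where w: "w \<in> m" "w \<noteq> \<zero>" using mne z1 by blast
  have wc: "w \<in> carrier R" using w m_carr by blast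
  have "P w \<subseteq> M2" unfolding P_def using mm2 w by blast
  moreover have "w \<otimes> \<zero> \<in> P w" by (rule P_mem[OF z1])
  ultimately have "P w = M2" using M20 z2 wc by auto
  moreover have "w \<notin> M2" using M20 w by blast
  ultimately show ?thesis using P_eq[OF wc] w by blast
next
  case False
  then obtain x y where xy: "x \<in> m" "y \<in> m" "x \<otimes> y \<notin> M3" by blast
  have p1: "x \<otimes> y \<in> M2" using mm2 xy by blast
  have xc: "x \<in> carrier R" "y \<in> carrier R" using xy m_carr by auto
  have p1c: "x \<otimes> y \<in> carrier R" using xc by simp
  have QI: "ideal (PIdl (x \<otimes> y) <+>\<^bsub>R\<^esub> M3) R"
    by (rule add_ideals[OF cgenideal_ideal[OF p1c] M3_ideal])
  show ?thesis
  proof (cases "M2 \<subseteq> PIdl (x \<otimes> y) <+>\<^bsub>R\<^esub> M3")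
    case True
    have "PIdl (x \<otimes> y) \<subseteq> P x" by (rule cgenideal_minimal[OF P_ideal[OF xc(1)] P_mem[OF xy(2)]])
    hence "PIdl (x \<otimes> y) <+>\<^bsub>R\<^esub> M3 \<subseteq> N x" unfolding N_def set_add_def' by blast
    hence "M2 \<subseteq> N x" using True by blast
    thus ?thesis using finish[OF ab g xy(1) _ p1 xy(3)] by blast
  next
    case False
    have "\<not> (\<forall>z\<in>m. \<forall>t\<in>m. z \<otimes> t \<in> PIdl (x \<otimes> y) <+>\<^bsub>R\<^esub> M3)"
    proof
      assume "\<forall>z\<in>m. \<forall>t\<in>m. z \<otimes> t \<in> PIdl (x \<otimes> y) <+>\<^bsub>R\<^esub> M3"
      hence "M2 \<subseteq> PIdl (x \<otimes> y) <+>\<^bsub>R\<^esub> M3" by (intro M2_min[OF QI]) blast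
      thus False using False by blast
    qed
    then obtain z t where zt: "z \<in> m" "t \<in> m" "z \<otimes> t \<notin> PIdl (x \<otimes> y) <+>\<^bsub>R\<^esub> M3" by blast
    have p2: "z \<otimes> t \<in> M2" using mm2 zt by blast
    have "M2 \<subseteq> Idl {x \<otimes> y, z \<otimes> t}" by (rule exchange[OF ab g p1 p2 xy(3) zt(3)])
    moreover have "Idl {x \<otimes> y, z \<otimes> t} \<subseteq> Idl {x \<otimes> y, z \<otimes> t} <+>\<^bsub>R\<^esub> M3"
      using in_sum_left[OF M3_ideal] genideal_ideal[of "{x \<otimes> y, z \<otimes> t}"] I_carr p1c p2 M2_carr by auto
    ultimately have "M2 \<subseteq> Idl {x \<otimes> y, z \<otimes> t} <+>\<^bsub>R\<^esub> M3" by blast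
    then obtain w where "w \<in> m" "M2 \<subseteq> N w" using cand[OF xy(1,2) zt(1,2)] by blast
    thus ?thesis using finish[OF ab g _ _ p1 xy(3)] by blast
  qed
qed


lemma part2:
  assumes x: "x \<in> m" and eq: "M2 = ideal_prod R (PIdl x) m" and xx: "x \<otimes> x \<in> M3"
  shows "M3 = {\<zero>}"
proof -
  have xc: "x \<in> carrier R" using x m_carr by blast
  have xxc: "x \<otimes> x \<in> carrier R" using xc by simp
  have M2P: "M2 = P x" using eq P_eq[OF xc] by simp
  have "M3 \<subseteq> P (x \<otimes> x)" unfolding pow3
  proof (rule prod_min[OF P_ideal[OF xxc]])
    fix i j assume ij: "i \<in> m" "j \<in> M2"
    then obtain r where r: "r \<in> m" "j = x \<otimes> r" using M2P unfolding P_def by blast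
    have "i \<otimes> r \<in> P x" using mm2[OF ij(1) r(1)] M2P by simp
    then obtain r' where r': "r' \<in> m" "i \<otimes> r = x \<otimes> r'" unfolding P_def by blast
    have ic: "i \<in> carrier R" "r \<in> carrier R" "r' \<in> carrier R" using ij r r' m_carr by auto
    have "i \<otimes> (x \<otimes> r) = x \<otimes> (i \<otimes> r)" using ic xc by algebra
    also have "\<dots> = x \<otimes> (x \<otimes> r')" using r' by simp
    also have "\<dots> = (x \<otimes> x) \<otimes> r'" using ic xc by algebra
    finally show "i \<otimes> j \<in> P (x \<otimes> x)" using r(2) P_mem[OF r'(1)] by simp
  qed
  note sub = this
  then obtain u where u: "u \<in> m" "x \<otimes> x = (x \<otimes> x) \<otimes> u" using xx unfolding P_def by blast
  have uc: "u \<in> carrier R" using u m_carr by blast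
  have "\<one> \<ominus> u \<notin> m"
  proof
    assume "\<one> \<ominus> u \<in> m"
    hence "(\<one> \<ominus> u) \<oplus> u \<in> m" using I_add[OF m_ideal _ u(1)] by blast
    moreover have "(\<one> \<ominus> u) \<oplus> u = \<one>" using uc by algebra
    ultimately show False using one_notin_m by simp
  qed
  moreover have "(\<one> \<ominus> u) \<otimes> (x \<otimes> x) = (x \<otimes> x) \<ominus> (x \<otimes> x) \<otimes> u" using uc xc by algebra
  hence "(\<one> \<ominus> u) \<otimes> (x \<otimes> x) = \<zero>" using u(2) xxc by simp
  ultimately have "x \<otimes> x \<in> {\<zero>}" using cancel[OF zeroideal _ _ xxc, of "\<one> \<ominus> u"] uc by simp
  hence "P (x \<otimes> x) \<subseteq> {\<zero>}" unfolding P_def using m_carr by auto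
  moreover have "\<zero> \<in> M3" by (rule I_zero[OF M3_ideal])
  ultimately show ?thesis using sub by blast
qed


primrec E where
  "E B [] = B"
| "E B (g # gs) = E (B <+>\<^bsub>R\<^esub> PIdl g) gs"

primrec cnd where
  "cnd B [] = True"
| "cnd B (g # gs) = (g \<in> carrier R \<and> (\<forall>r\<in>m. r \<otimes> g \<in> B) \<and> cnd (B <+>\<^bsub>R\<^esub> PIdl g) gs)"

lemma step_ideal: "ideal B R \<Longrightarrow> g \<in> carrier R \<Longrightarrow> ideal (B <+>\<^bsub>R\<^esub> PIdl g) R"
  by (rule add_ideals[OF _ cgenideal_ideal])

lemma step_sub: "ideal B R \<Longrightarrow> g \<in> carrier R \<Longrightarrow> B \<subseteq> B <+>\<^bsub>R\<^esub> PIdl g"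
  using in_sum_left[OF cgenideal_ideal] I_carr by blast

lemma step_g: "ideal B R \<Longrightarrow> g \<in> carrier R \<Longrightarrow> g \<in> B <+>\<^bsub>R\<^esub> PIdl g"
  using in_sum_right cgenideal_self by blast

lemma E_props: "ideal B R \<Longrightarrow> set gs \<subseteq> carrier R \<Longrightarrow> ideal (E B gs) R \<and> B \<subseteq> E B gs \<and> set gs \<subseteq> E B gs"
proof (induction gs arbitrary: B)
  case Nil then show ?case by simp
next
  case (Cons g gs)
  have gc: "g \<in> carrier R" using Cons by simp
  have I: "ideal (B <+>\<^bsub>R\<^esub> PIdl g) R" using step_ideal[OF Cons(2) gc] .
  have IH: "ideal (E (B <+>\<^bsub>R\<^esub> PIdl g) gs) R \<and> B <+>\<^bsub>R\<^esub> PIdl g \<subseteq> E (B <+>\<^bsub>R\<^esub> PIdl g) gs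
     \<and> set gs \<subseteq> E (B <+>\<^bsub>R\<^esub> PIdl g) gs" using Cons.IH[OF I] Cons(3) by simp
  then show ?case using step_sub[OF Cons(2) gc] step_g[OF Cons(2) gc] by auto
qed

lemma E_append: "E B (xs @ ys) = E (E B xs) ys"
  by (induction xs arbitrary: B) simp_all

lemma cnd_append: "cnd B (xs @ ys) = (cnd B xs \<and> cnd (E B xs) ys)"
  by (induction xs arbitrary: B) auto

lemma cnd_intro: "ideal B R \<Longrightarrow> set gs \<subseteq> carrier R \<Longrightarrow> (\<forall>g\<in>set gs. \<forall>r\<in>m. r \<otimes> g \<in> B) \<Longrightarrow> cnd B gs"
proof (induction gs arbitrary: B)
  case Nil then show ?case by simp
next
  case (Cons g gs)
  have gc: "g \<in> carrier R" using Cons by simp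
  have "\<forall>h\<in>set gs. \<forall>r\<in>m. r \<otimes> h \<in> B <+>\<^bsub>R\<^esub> PIdl g"
    using Cons(4) step_sub[OF Cons(2) gc] by auto
  moreover have "set gs \<subseteq> carrier R" using Cons(3) by simp
  ultimately have "cnd (B <+>\<^bsub>R\<^esub> PIdl g) gs"
    using Cons.IH[OF step_ideal[OF Cons(2) gc]] by blast
  then show ?case using Cons gc by simp
qed

lemma twoval:
  assumes B: "ideal B R" and g: "g \<in> carrier R" and mg: "\<forall>r\<in>m. r \<otimes> g \<in> B"
    and D: "ideal D R" "B \<subseteq> D" "D \<subseteq> B <+>\<^bsub>R\<^esub> PIdl g"
  shows "D = B \<or> D = B <+>\<^bsub>R\<^esub> PIdl g"
proof (cases "D \<subseteq> B")
  case True then show ?thesis using D by blast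
next
  case False
  then obtain d where d: "d \<in> D" "d \<notin> B" by blast
  hence "d \<in> B <+>\<^bsub>R\<^esub> PIdl g" using D(3) by blast
  then obtain b e where be: "b \<in> B" "e \<in> PIdl g" "d = b \<oplus> e" unfolding sa_iff by blast
  obtain c where c: "c \<in> carrier R" "e = c \<otimes> g" using be(2) unfolding cgenideal_def by blast
  have bc: "b \<in> carrier R" using be B I_carr by blast
  have cm: "c \<notin> m"
  proof
    assume "c \<in> m"
    hence "e \<in> B" using mg c by simp
    hence "d \<in> B" using be I_add[OF B] by simp
    thus False using d by blast
  qed
  have "c \<otimes> g = d \<ominus> b" using be(3) c bc g by (simp add: a_minus_def a_assoc[symmetric] r_neg a_comm)
  hence "c \<otimes> g \<in> D" using I_minus[OF D(1) d(1)] be(1) D(2) by auto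
  hence "g \<in> D" using cancel[OF D(1) c(1) cm g] by simp
  hence "PIdl g \<subseteq> D" by (rule cgenideal_minimal[OF D(1)])
  hence "B <+>\<^bsub>R\<^esub> PIdl g \<subseteq> D" using D(2) I_add[OF D(1)] unfolding set_add_def' by blast
  then show ?thesis using D by blast
qed

lemma dcc_list:
  "ideal B R \<Longrightarrow> cnd B gs \<Longrightarrow> (\<And>n. ideal (C n) R \<and> C (Suc n) \<subseteq> C n \<and> B \<subseteq> C n \<and> C n \<subseteq> E B gs)
   \<Longrightarrow> \<exists>N. \<forall>n\<ge>N. C n = C N"
proof (induction gs arbitrary: B C)
  case Nil
  have "C n = B" for n using Nil(3)[of n] by auto
  then show ?case by auto
next
  case (Cons g gs)
  have gc: "g \<in> carrier R" and mg: "\<forall>r\<in>m. r \<otimes> g \<in> B" and cn: "cnd (B <+>\<^bsub>R\<^esub> PIdl g) gs"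
    using Cons(3) by auto
  define B' where "B' = B <+>\<^bsub>R\<^esub> PIdl g"
  have B': "ideal B' R" unfolding B'_def by (rule step_ideal[OF Cons(2) gc])
  have BB': "B \<subseteq> B'" unfolding B'_def by (rule step_sub[OF Cons(2) gc])
  have Ci: "ideal (C n) R" "C (Suc n) \<subseteq> C n" "B \<subseteq> C n" "C n \<subseteq> E B' gs" for n
    using Cons(4)[of n] unfolding B'_def by auto
  have anti: "C n \<subseteq> C k" if "k \<le> n" for n k
    using that
  proof (induction n rule: dec_induct)
    case base then show ?case by simp
  next
    case (step n) then show ?case using Ci(2)[of n] by blast
  qed
  have EB': "ideal (E B' gs) R \<and> B' \<subseteq> E B' gs"
  proof -
    have "cnd B' gs" using cn unfolding B'_def .
    have "set gs \<subseteq> carrier R"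
    proof -
      have "\<forall>B. cnd B gs \<longrightarrow> set gs \<subseteq> carrier R" by (induction gs) auto
      thus ?thesis using cn by blast
    qed
    thus ?thesis using E_props[OF B'] by blast
  qed
  define C2 where "C2 n = C n <+>\<^bsub>R\<^esub> B'" for n
  have C2: "ideal (C2 n) R \<and> C2 (Suc n) \<subseteq> C2 n \<and> B' \<subseteq> C2 n \<and> C2 n \<subseteq> E B' gs" for n
  proof (intro conjI)
    show "ideal (C2 n) R" unfolding C2_def by (rule add_ideals[OF Ci(1) B'])
    show "C2 (Suc n) \<subseteq> C2 n" unfolding C2_def set_add_def' using Ci(2)[of n] by blast
    show "B' \<subseteq> C2 n" unfolding C2_def using in_sum_right[OF Ci(1)] I_carr[OF B'] by blast
    show "C2 n \<subseteq> E B' gs" unfolding C2_def set_add_def'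
      using Ci(4)[of n] EB' I_add[of "E B' gs"] by blast
  qed
  have cnB': "cnd B' gs" using cn unfolding B'_def .
  obtain N2 where N2: "\<forall>n\<ge>N2. C2 n = C2 N2" using Cons.IH[of B' C2, OF B' cnB' C2] by blast
  define C1 where "C1 n = C n \<inter> B'" for n
  have C1v: "C1 n = B \<or> C1 n = B'" for n
  proof -
    have "ideal (C1 n) R" unfolding C1_def by (rule i_intersect[OF Ci(1) B'])
    moreover have "B \<subseteq> C1 n" unfolding C1_def using Ci(3) BB' by blast
    moreover have "C1 n \<subseteq> B'" unfolding C1_def by blast
    ultimately show ?thesis using twoval[OF Cons(2) gc mg] unfolding B'_def by blast
  qed
  have C1anti: "C1 n \<subseteq> C1 k" if "k \<le> n" for n k unfolding C1_def using anti[OF that] by blast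
  obtain N1 where N1: "\<forall>n\<ge>N1. C1 n = C1 N1"
  proof (cases "\<exists>n0. C1 n0 = B")
    case True
    then obtain n0 where n0: "C1 n0 = B" by blast
    have "C1 n = B" if "n \<ge> n0" for n
      using C1anti[OF that] n0 Ci(3)[of n] BB' unfolding C1_def by blast
    then show ?thesis using that[of n0] n0 by simp
  next
    case False
    then have "C1 n = B'" for n using C1v by blast
    then show ?thesis using that[of 0] by simp
  qed
  define N where "N = max N1 N2"
  have "C n = C N" if "n \<ge> N" for n
  proof
    show "C n \<subseteq> C N" using anti that by blast
    show "C N \<subseteq> C n"
    proof
      fix z assume z: "z \<in> C N"
      have "C2 n = C2 N" using N2 that unfolding N_def by (metis max.boundedE order_refl)
      moreover have "z \<in> C2 N" unfolding C2_def using in_sum_left[OF B' z] I_carr[OF Ci(1) z] by blast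
      ultimately have "z \<in> C2 n" by simp
      then obtain c b where cb: "c \<in> C n" "b \<in> B'" "z = c \<oplus> b" unfolding C2_def sa_iff by blast
      have cc: "c \<in> carrier R" "b \<in> carrier R" using cb I_carr[OF Ci(1)] I_carr[OF B'] by auto
      have "b = (c \<oplus> b) \<ominus> c" using cc by algebra
      hence "b = z \<ominus> c" using cb(3) by simp
      moreover have "c \<in> C N" using cb(1) anti that by blast
      ultimately have "b \<in> C N" using I_minus[OF Ci(1) z] by simp
      hence "b \<in> C1 N" unfolding C1_def using cb(2) by blast
      moreover have "C1 n = C1 N" using N1 that unfolding N_def by (metis max.boundedE order_refl)
      ultimately have "b \<in> C n" unfolding C1_def by blast
      thus "z \<in> C n" using cb I_add[OF Ci(1)] by simp
    qed
  qed
  then show ?case by blast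
qed


lemma artin:
  assumes noeth: "noetherian_ring R" and M30: "M3 = {\<zero>}"
  shows "artinian R"
proof -
  obtain A2 where A2: "A2 \<subseteq> carrier R" "finite A2" "M2 = Idl A2"
    using noetherian_ring.finetely_gen[OF noeth M2_ideal] by blast
  obtain A1 where A1: "A1 \<subseteq> carrier R" "finite A1" "m = Idl A1"
    using noetherian_ring.finetely_gen[OF noeth m_ideal] by blast
  obtain l2 where l2: "set l2 = A2" using finite_list[OF A2(2)] by blast
  obtain l1 where l1: "set l1 = A1" using finite_list[OF A1(2)] by blast
  have A2M2: "A2 \<subseteq> M2" using A2 genideal_self by simp
  have A1m: "A1 \<subseteq> m" using A1 genideal_self by simp
  have c2: "cnd {\<zero>} l2"
  proof (rule cnd_intro[OF zeroideal])
    show "set l2 \<subseteq> carrier R" using l2 A2 by simp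
    show "\<forall>g\<in>set l2. \<forall>r\<in>m. r \<otimes> g \<in> {\<zero>}" using l2 A2M2 m3 M30 by blast
  qed
  define E2 where "E2 = E {\<zero>} l2"
  have E2p: "ideal E2 R \<and> {\<zero>} \<subseteq> E2 \<and> set l2 \<subseteq> E2"
    unfolding E2_def by (rule E_props[OF zeroideal]) (use l2 A2 in simp)
  have M2E2: "M2 \<subseteq> E2" unfolding A2(3) using E2p l2 genideal_minimal by blast
  have c1: "cnd E2 l1"
  proof (rule cnd_intro)
    show "ideal E2 R" using E2p by blast
    show "set l1 \<subseteq> carrier R" using l1 A1 by simp
    show "\<forall>g\<in>set l1. \<forall>r\<in>m. r \<otimes> g \<in> E2" using l1 A1m mm2 M2E2 by blast
  qed
  define E1 where "E1 = E E2 l1"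
  have E1p: "ideal E1 R \<and> E2 \<subseteq> E1 \<and> set l1 \<subseteq> E1"
    unfolding E1_def by (rule E_props) (use l1 A1 E2p in simp_all)
  have mE1: "m \<subseteq> E1" unfolding A1(3) using E1p l1 genideal_minimal by blast
  have c0: "cnd E1 [\<one>]" using mE1 by (auto simp: m_carr')
  define gs where "gs = l2 @ l1 @ [\<one>]"
  have cg: "cnd {\<zero>} gs" unfolding gs_def cnd_append using c2 c1 c0 unfolding E2_def E1_def
    by (simp add: E_append)
  have Eg: "E {\<zero>} gs = E E1 [\<one>]" unfolding gs_def E_append E2_def E1_def by simp
  have "ideal (E E1 [\<one>]) R \<and> E1 \<subseteq> E E1 [\<one>] \<and> set [\<one>] \<subseteq> E E1 [\<one>]"
    by (rule E_props) (use E1p in simp_all)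
  hence "E {\<zero>} gs = carrier R" unfolding Eg using ideal.one_imp_carrier by auto
  note EC = this
  show ?thesis unfolding artinian_def
  proof (intro allI impI)
    fix C :: "nat \<Rightarrow> 'a set" assume h: "\<forall>n. ideal (C n) R \<and> C (Suc n) \<subseteq> C n"
    show "\<exists>N. \<forall>n\<ge>N. C n = C N"
    proof (rule dcc_list[OF zeroideal cg])
      fix n
      show "ideal (C n) R \<and> C (Suc n) \<subseteq> C n \<and> {\<zero>} \<subseteq> C n \<and> C n \<subseteq> E {\<zero>} gs"
        using h I_zero[of "C n"] I_carr[of "C n"] EC by blast
    qed
  qed
qed

lemma gens2:
  assumes noeth: "noetherian_ring R" and mg: "min_gens R M2 \<le> 2"
  shows "\<exists>a b. a \<in> carrier R \<and> b \<in> carrier R \<and> M2 = Idl {a, b}"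
proof -
  obtain A0 where A0: "A0 \<subseteq> carrier R" "finite A0" "M2 = Idl A0"
    using noetherian_ring.finetely_gen[OF noeth M2_ideal] by blast
  have ex: "\<exists>A. A \<subseteq> carrier R \<and> finite A \<and> card A = card A0 \<and> M2 = Idl A"
    using A0 by blast
  have "\<exists>A. A \<subseteq> carrier R \<and> finite A \<and> card A = (LEAST n. \<exists>A. A \<subseteq> carrier R \<and> finite A \<and> card A = n \<and> M2 = Idl A) \<and> M2 = Idl A"
    by (rule LeastI[of "\<lambda>n. \<exists>A. A \<subseteq> carrier R \<and> finite A \<and> card A = n \<and> M2 = Idl A", OF ex])
  then obtain A where A: "A \<subseteq> carrier R" "finite A" "card A = min_gens R M2" "M2 = Idl A"
    unfolding min_gens_def by blast
  have "card A = 0 \<or> card A = 1 \<or> card A = 2" using A(3) mg by linarith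
  moreover
  { assume "card A = 0"
    hence A0: "A = {}" using A(2) by simp
    have "Idl {} = Idl {\<zero>, \<zero>}"
    proof
      show "Idl {} \<subseteq> Idl {\<zero>, \<zero>}" by (rule genideal_minimal[OF genideal_ideal]) simp_all
      have "Idl {\<zero>, \<zero>} = {\<zero>}" using genideal_zero by simp
      moreover have "\<zero> \<in> Idl {}" by (rule I_zero[OF genideal_ideal]) simp
      ultimately show "Idl {\<zero>, \<zero>} \<subseteq> Idl {}" by simp
    qed
    hence "M2 = Idl {\<zero>, \<zero>}" using A(4) unfolding A0 by simp
    hence ?thesis by (intro exI[of _ \<zero>]) simp }
  moreover
  { assume "card A = 1"
    then obtain a where a: "A = {a}" by (rule card_1_singletonE)
    hence "a \<in> carrier R" "M2 = Idl {a, a}" using A(1,4) by auto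
    hence ?thesis by (intro exI[of _ a]) simp }
  moreover
  { assume "card A = 2"
    then obtain a b where ab: "A = {a, b}" by (auto simp: card_2_iff)
    hence "a \<in> carrier R" "b \<in> carrier R" "M2 = Idl {a, b}" using A(1,4) by auto
    hence ?thesis by blast }
  ultimately show ?thesis by blast
qed

lemma lo_bound:
  assumes art: "artinian R" and M30: "M3 = {\<zero>}"
  shows "\<not> loewy_length R m \<ge> 3"
proof -
  define S where "S = {i. ideal_pow R m i \<noteq> {\<zero>}}"
  have Z: "ideal_pow R m i = {\<zero>}" if "3 \<le> i" for i
  proof -
    have "ideal_pow R m i \<subseteq> M3" by (rule pow_mono[OF that])
    moreover have "\<zero> \<in> ideal_pow R m i" by (rule I_zero[OF pow_ideal])
    ultimately show ?thesis using M30 by blast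
  qed
  have Ssub: "S \<subseteq> {..2}"
  proof
    fix i assume iS: "i \<in> S"
    show "i \<in> {..2}"
    proof (rule ccontr)
      assume "i \<notin> {..2}"
      hence "3 \<le> i" by simp
      hence "ideal_pow R m i = {\<zero>}" by (rule Z)
      thus False using iS unfolding S_def by simp
    qed
  qed
  have "\<one> \<noteq> \<zero>"
  proof
    assume "\<one> = \<zero>" thus False using one_notin_m I_zero[OF m_ideal] by simp
  qed
  hence "carrier R \<noteq> {\<zero>}" using one_closed by blast
  hence "0 \<in> S" unfolding S_def by simp
  hence "Max S \<le> 2" by (intro Max.boundedI finite_subset[OF Ssub]) (use Ssub in auto)
  hence le2: "loewy_length R m \<le> 2" unfolding loewy_length_def S_def[symmetric] using art
    by (simp add: numeral_eq_enat)
  show ?thesis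
  proof
    assume "3 \<le> loewy_length R m"
    hence "(3::enat) \<le> 2" using le2 by (rule order_trans)
    thus False by simp
  qed
qed

end

theorem lemma3p1:
  fixes R :: "('a, 'b) ring_scheme" and m :: "'a set"
  assumes "cring R" and "noetherian_ring R"
    and "maximalideal m R" and "m \<noteq> {\<zero>\<^bsub>R\<^esub>}"
    and "\<forall>J. maximalideal J R \<longrightarrow> J = m"
    and "min_gens R (ideal_pow R m 2) \<le> 2"
  shows "(\<exists>x \<in> m - ideal_pow R m 2. ideal_pow R m 2 = ideal_prod R (PIdl\<^bsub>R\<^esub> x) m)
       \<and> (loewy_length R m \<ge> 3 \<longrightarrow>
          (\<forall>x \<in> m - ideal_pow R m 2. ideal_pow R m 2 = ideal_prod R (PIdl\<^bsub>R\<^esub> x) m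
              \<longrightarrow> x \<otimes>\<^bsub>R\<^esub> x \<notin> ideal_pow R m 3))"
proof -
  have LL: "loc R m"
  proof (rule loc.intro[OF assms(1)], rule loc_axioms.intro)
    show "maximalideal m R" by (rule assms(3))
    fix J assume "maximalideal J R" thus "J = m" using assms(5) by blast
  qed
  interpret L: loc R m by (rule LL)
  obtain a b where ab: "a \<in> carrier R" "b \<in> carrier R" "ideal_pow R m 2 = Idl\<^bsub>R\<^esub> {a, b}"
    using L.gens2[OF assms(2) assms(6)] by blast
  have P1: "\<exists>x \<in> m - ideal_pow R m 2. ideal_pow R m 2 = ideal_prod R (PIdl\<^bsub>R\<^esub> x) m"
    by (rule L.part1[OF ab assms(4)])
  have P2: "x \<otimes>\<^bsub>R\<^esub> x \<notin> ideal_pow R m 3"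
    if lo: "loewy_length R m \<ge> 3" and x: "x \<in> m - ideal_pow R m 2"
      and eq: "ideal_pow R m 2 = ideal_prod R (PIdl\<^bsub>R\<^esub> x) m" for x
  proof
    assume xx: "x \<otimes>\<^bsub>R\<^esub> x \<in> ideal_pow R m 3"
    have M30: "ideal_pow R m 3 = {\<zero>\<^bsub>R\<^esub>}" using L.part2[OF _ eq xx] x by blast
    have "artinian R" by (rule L.artin[OF assms(2) M30])
    thus False using L.lo_bound[OF _ M30] lo by blast
  qed
  show ?thesis using P1 P2 by blast
qed

end
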